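(* Let $\Lambda\subseteq\Sigma_A$ and $\Gamma\subseteq\Sigma_B$ be shift spaces and let $\Phi:\Lambda\to\Gamma$ be a sliding block code such that $\Phi(\mathcal O)=\mathcal O$. Then for every finite sequence $x\in\Lambda^{\mathrm{fin}}$, $\Phi(x)$ is a finite sequence in $\Gamma$ with length $l(\Phi(x))\le l(x)$.
   Context: $A,B$ are countable discrete alphabets; $\varepsilon$ is the empty letter. $\Sigma_A$ consists of $A^{\mathbb N}$ together with (when $A$ is infinite) the finite sequences in $A\cup\{\varepsilon\}$ (some entry $\varepsilon$, and all entries after the first $\varepsilon$ equal $\varepsilon$), including the empty sequence $\mathcal O=(\varepsilon\varepsilon\dots)$. The length $l(x)$ is the number of entries before the first $\varepsilon$ ($\infty$ if none); $\Lambda^{\mathrm{fin}}$ is the set of finite sequences in $\Lambda$. The topology is generated by the generalized cylinders $Z(x,F)=\{y: y_i=x_i\ (i\le l(x)),\ y_{l(x)+1}\notin F\}$ ($x$ finite, $F\subset A$ finite). The shift is $\sigma((x_i)_i)=(x_{i+1})_i$. A shift space is a closed, $\sigma$-invariant $\Lambda\subseteq\Sigma_A$ with the infinite extension property ($\mathcal O\in\Lambda$ iff infinitely many letters occur in $\Lambda$; a finite $x\neq\mathcal O$ is in $\Lambda$ iff infinitely many letters $b$ are such that $xb$ occurs as a word in some element of $\Lambda$). $B(\Sigma_A)$ denotes the set of finite words occurring in elements of $\Sigma_A$. A set $C\subseteq\Lambda$ is finitely defined in $\Lambda$ if there exist $I,J\subseteq\mathbb N$, integers $\ell_i,n_j\ge0$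 and words $b_i,d_j\in B(\Sigma_A)$ with $C=\{x\in\Lambda: (x_1\dots x_{1+\ell_i})=b_i\text{ for some } i\}$ and $\Lambda\setminus C=\{x\in\Lambda: (x_1\dots x_{1+n_j})=d_j\text{ for some } j\}$. A map $\Phi:\Lambda\to\Gamma$ is a sliding block code if there is a partition $\{C_a\}_{a\in B\cup\{\varepsilon\}}$ of $\Lambda$ into finitely defined sets with $\sigma(C_\varepsilon)\subseteq C_\varepsilon$ such that for all $x\in\Lambda$, $n\in\mathbb N$, $(\Phi(x))_n$ is the unique $a$ with $\sigma^{n-1}(x)\in C_a$. *)

theory Defs
  imports "HOL-Analysis.Analysis" "HOL-Library.Extended_Nat"
begin

text \<open>Sequences are indexed from 0 (entry i corresponds to the paper's x_(i+1)).
  The empty letter is None; a letter a of the alphabet is Some a.\<close>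

type_synonym 'a seq = "nat \<Rightarrow> 'a option"

definition emptyseq :: "'a seq" where
  "emptyseq = (\<lambda>_. None)"

definition FullShift :: "'a set \<Rightarrow> 'a seq set" where
  "FullShift A = {x. (\<forall>i. x i \<in> Some ` A) \<or>
      (infinite A \<and> (\<forall>i. x i \<in> insert None (Some ` A)) \<and> (\<exists>i. x i = None) \<and>
       (\<forall>i j. i \<le> j \<longrightarrow> x i = None \<longrightarrow> x j = None))}"

definition len :: "'a seq \<Rightarrow> enat" where
  "len x = (if (\<forall>i. x i \<noteq> None) then \<infinity> else enat (LEAST i. x i = None))"

definition shift :: "'a seq \<Rightarrow> 'a seq" where
  "shift x = (\<lambda>i. x (Suc i))"

definition cyl :: "'a set \<Rightarrow> 'a list \<Rightarrow> 'a set \<Rightarrow> 'a seq set" where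
  "cyl A w F = {y \<in> FullShift A. (\<forall>i<length w. y i = Some (w ! i)) \<and> y (length w) \<notin> Some ` F}"

definition cylinders :: "'a set \<Rightarrow> 'a seq set set" where
  "cylinders A = {cyl A w F | w F. w \<in> lists A \<and> F \<subseteq> A \<and> finite F}"

definition shift_topology :: "'a set \<Rightarrow> 'a seq topology" where
  "shift_topology A = subtopology (topology_generated_by (cylinders A)) (FullShift A)"

definition occurs :: "'a option list \<Rightarrow> 'a seq \<Rightarrow> bool" where
  "occurs w y = (\<exists>k. \<forall>i<length w. y (k + i) = w ! i)"

definition blocks :: "'a set \<Rightarrow> 'a option list set" where
  "blocks A = {w. \<exists>y\<in>FullShift A. occurs w y}"

definition finseq :: "'a list \<Rightarrow> 'a seq" where
  "finseq w = (\<lambda>i. if i < length w then Some (w ! i) else None)"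

definition prefix_of :: "'a seq \<Rightarrow> nat \<Rightarrow> 'a option list" where
  "prefix_of x n = map x [0..<n]"

definition infinite_extension_property :: "'a set \<Rightarrow> 'a seq set \<Rightarrow> bool" where
  "infinite_extension_property A \<Lambda> \<longleftrightarrow>
     (emptyseq \<in> \<Lambda> \<longleftrightarrow> infinite {a. \<exists>x\<in>\<Lambda>. \<exists>i. x i = Some a}) \<and>
     (\<forall>w\<in>lists A. w \<noteq> [] \<longrightarrow>
        (finseq w \<in> \<Lambda> \<longleftrightarrow> infinite {b. \<exists>y\<in>\<Lambda>. occurs (map Some (w @ [b])) y}))"

definition shift_space :: "'a set \<Rightarrow> 'a seq set \<Rightarrow> bool" where
  "shift_space A \<Lambda> \<longleftrightarrow> \<Lambda> \<subseteq> FullShift A \<and> closedin (shift_topology A) \<Lambda> \<and>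
     shift ` \<Lambda> \<subseteq> \<Lambda> \<and> infinite_extension_property A \<Lambda>"

definition finitely_defined :: "'a set \<Rightarrow> 'a seq set \<Rightarrow> 'a seq set \<Rightarrow> bool" where
  "finitely_defined A \<Lambda> C \<longleftrightarrow> C \<subseteq> \<Lambda> \<and>
     (\<exists>(I::nat set) (l::nat \<Rightarrow> nat) b (J::nat set) (n::nat \<Rightarrow> nat) d.
        (\<forall>i\<in>I. b i \<in> blocks A) \<and> (\<forall>j\<in>J. d j \<in> blocks A) \<and>
        C = {x \<in> \<Lambda>. \<exists>i\<in>I. prefix_of x (Suc (l i)) = b i} \<and>
        \<Lambda> - C = {x \<in> \<Lambda>. \<exists>j\<in>J. prefix_of x (Suc (n j)) = d j})"

definition sliding_block_code ::
  "'a set \<Rightarrow> 'b set \<Rightarrow> 'a seq set \<Rightarrow> 'b seq set \<Rightarrow> ('a seq \<Rightarrow> 'b seq) \<Rightarrow> bool" where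
  "sliding_block_code A B \<Lambda> \<Gamma> \<Phi> \<longleftrightarrow> \<Phi> ` \<Lambda> \<subseteq> \<Gamma> \<and>
     (\<exists>C :: 'b option \<Rightarrow> 'a seq set.
        (\<forall>a\<in>insert None (Some ` B). finitely_defined A \<Lambda> (C a)) \<and>
        (\<forall>a\<in>insert None (Some ` B). \<forall>a'\<in>insert None (Some ` B). a \<noteq> a' \<longrightarrow> C a \<inter> C a' = {}) \<and>
        (\<Union>a\<in>insert None (Some ` B). C a) = \<Lambda> \<and>
        shift ` (C None) \<subseteq> C None \<and>
        (\<forall>x\<in>\<Lambda>. \<forall>n. \<Phi> x n = (THE a. a \<in> insert None (Some ` B) \<and> (shift ^^ n) x \<in> C a)))"

end

theory Submission
  imports Defs
begin

lemma shift_pow: "(shift ^^ n) x = (\<lambda>i. x (i + n))"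
  by (induction n arbitrary: x) (auto simp: shift_def funpow_Suc_right)

lemma shift_pow_in: "shift ` L \<subseteq> L \<Longrightarrow> x \<in> L \<Longrightarrow> (shift ^^ n) x \<in> L"
  by (induction n) auto

theorem mainTheorem6:
  fixes A :: "'a set" and B :: "'b set"
    and \<Lambda> :: "'a seq set" and \<Gamma> :: "'b seq set" and \<Phi> :: "'a seq \<Rightarrow> 'b seq"
  assumes "countable A" and "countable B"
    and "shift_space A \<Lambda>" and "shift_space B \<Gamma>"
    and "sliding_block_code A B \<Lambda> \<Gamma> \<Phi>"
    and "\<Phi> emptyseq = emptyseq"
  shows "\<forall>x\<in>\<Lambda>. len x < \<infinity> \<longrightarrow> \<Phi> x \<in> \<Gamma> \<and> len (\<Phi> x) < \<infinity> \<and> len (\<Phi> x) \<le> len x"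
proof (intro ballI impI)
  fix x assume x: "x \<in> \<Lambda>" and lx: "len x < \<infinity>"
  have sub: "\<Lambda> \<subseteq> FullShift A" and inv: "shift ` \<Lambda> \<subseteq> \<Lambda>"
    using assms(3) by (auto simp: shift_space_def)
  obtain C where PhiC: "\<forall>x\<in>\<Lambda>. \<forall>n. \<Phi> x n = (THE a. a \<in> insert None (Some ` B) \<and> (shift ^^ n) x \<in> C a)"
    and img: "\<Phi> ` \<Lambda> \<subseteq> \<Gamma>"
    using assms(5) unfolding sliding_block_code_def by blast
  have ex: "\<exists>i. x i = None" using lx by (auto simp: len_def split: if_splits)
  define m where "m = (LEAST i. x i = None)"
  have lenx: "len x = enat m" using ex by (auto simp: len_def m_def)
  have xm: "x m = None" unfolding m_def using ex by (rule LeastI_ex)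
  have xF: "x \<in> FullShift A" using x sub by auto
  have after: "\<And>j. m \<le> j \<Longrightarrow> x j = None"
  proof -
    fix j assume j: "m \<le> j"
    have "\<not> (\<forall>i. x i \<in> Some ` A)" proof assume "\<forall>i. x i \<in> Some ` A" hence "x m \<in> Some ` A" by blast thus False using xm by auto qed
    thus "x j = None" using xF xm j unfolding FullShift_def by blast
  qed
  have shm: "\<And>n. m \<le> n \<Longrightarrow> (shift ^^ n) x = emptyseq"
    using after by (auto simp: shift_pow emptyseq_def)
  have eL: "emptyseq \<in> \<Lambda>" using shift_pow_in[OF inv x, of m] shm by auto
  have ee: "\<And>n. (shift ^^ n) (emptyseq::'a seq) = emptyseq"
    by (simp add: shift_pow emptyseq_def)
  have "\<Phi> x m = \<Phi> emptyseq m"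
    using PhiC x eL shm[of m] ee[of m] by simp
  hence Pm: "\<Phi> x m = None" using assms(6) by (simp add: emptyseq_def)
  have "len (\<Phi> x) \<le> enat m"
  proof -
    have "\<not> (\<forall>i. \<Phi> x i \<noteq> None)" using Pm by auto
    moreover have "(LEAST i. \<Phi> x i = None) \<le> m" using Pm by (rule Least_le)
    ultimately show ?thesis by (simp add: len_def)
  qed
  moreover have "enat m < \<infinity>" by simp
  ultimately have "len (\<Phi> x) < \<infinity>" by (rule le_less_trans)
  moreover note \<open>len (\<Phi> x) \<le> enat m\<close>
  ultimately show "\<Phi> x \<in> \<Gamma> \<and> len (\<Phi> x) < \<infinity> \<and> len (\<Phi> x) \<le> len x"
    using img x lenx by auto
qed

end
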